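(* Let $p,q\ge 1$ be integers. For an integer $n\ge 1$, let $\mathcal{M}^{[1,1+n]}$ denote the Lie group whose underlying manifold is $\mathbb{R}\times\mathbb{R}^{n}$, with points written $\Upsilon=[\Upsilon_1,\boldsymbol{\Upsilon}_2]^\intercal$ ($\Upsilon_1\in\mathbb{R}$, $\boldsymbol{\Upsilon}_2\in\mathbb{R}^n$), and with group operation $$\Psi*\Upsilon=\begin{bmatrix}\Upsilon_1+\Psi_1\\ \boldsymbol{\Upsilon}_2+e^{-\Upsilon_1}\boldsymbol{\Psi}_2\end{bmatrix}.$$ Let $h:\mathcal{M}^{[1,1+q]}\to\mathcal{M}^{[1,1+p]}$ be a Lie group homomorphism whose image $h(\mathcal{M}^{[1,1+q]})$ has dimension greater than $1$. Then there exist a unique matrix $W\in\mathbb{R}^{p\times q}$ and a unique vector $\boldsymbol{b}\in\mathbb{R}^p$ such that for all $\Upsilon\in\mathcal{M}^{[1,1+q]}$, $$h(\Upsilon)=\begin{bmatrix}\Upsilon_1\\ W\boldsymbol{\Upsilon}_2+(1-e^{-\Upsilon_1})\,\boldsymbol{b}\end{bmatrix}.$$ Conversely, for every pair $(W,\boldsymbol{b})\in\mathbb{R}^{p\times q}\times\mathbb{R}^p$, the map $h$ defined by this formula is a Lie group homomorphism $\mathcal{M}^{[1,1+q]}\to\mathcal{M}^{[1,1+p]}$.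
   Context: The group $\mathcal{M}^{[1,1+n]}$ is the solvable Lie group metrically equivalent to the hyperbolic space $\mathbb{H}^{n+1}\simeq \mathrm{SO}(1,1+n)/\mathrm{SO}(1+n)$, described in "solvable coordinates" $\Upsilon=[\Upsilon_1,\boldsymbol{\Upsilon}_2]$; its identity element is $\Upsilon=\boldsymbol{0}$. Equivalently, it is the group of real $(n+2)\times(n+2)$ matrices $$\mathbb{L}(\Upsilon)=\begin{bmatrix}e^{\Upsilon_1}&\sqrt2 e^{\Upsilon_1}\boldsymbol{\Upsilon}_2^\intercal&-e^{\Upsilon_1}|\boldsymbol{\Upsilon}_2|^2\\0&\mathbb{I}_n&-\sqrt2\boldsymbol{\Upsilon}_2\\0&0&e^{-\Upsilon_1}\end{bmatrix}$$ under matrix multiplication, with $\mathbb{L}(\Psi*\Upsilon)=\mathbb{L}(\Psi)\mathbb{L}(\Upsilon)$. *)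

theory Defs
  imports "HOL-Analysis.Analysis"
begin

type_synonym 'n solv = "real \<times> (real ^ 'n)"

definition solv_mult :: "'n::finite solv \<Rightarrow> 'n solv \<Rightarrow> 'n solv" where
  "solv_mult \<Psi> \<Upsilon> = (fst \<Upsilon> + fst \<Psi>, snd \<Upsilon> + exp (- fst \<Upsilon>) *\<^sub>R snd \<Psi>)"

fun dir_deriv_iter ::
  "('a::real_normed_vector \<Rightarrow> 'b::real_normed_vector) \<Rightarrow> 'a list \<Rightarrow> 'a \<Rightarrow> 'b" where
  "dir_deriv_iter f [] = f"
| "dir_deriv_iter f (v # vs) =
     (\<lambda>x. vector_derivative (\<lambda>t. dir_deriv_iter f vs (x + t *\<^sub>R v)) (at 0))"

definition smooth_map ::
  "('a::euclidean_space \<Rightarrow> 'b::euclidean_space) \<Rightarrow> bool" where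
  "smooth_map f \<longleftrightarrow>
     (\<forall>vs. continuous_on UNIV (dir_deriv_iter f vs)) \<and>
     (\<forall>vs v x. ((\<lambda>t. dir_deriv_iter f vs (x + t *\<^sub>R v)) has_vector_derivative
                   dir_deriv_iter f (v # vs) x) (at 0))"

definition solv_lie_hom :: "('q::finite solv \<Rightarrow> 'p::finite solv) \<Rightarrow> bool" where
  "solv_lie_hom h \<longleftrightarrow> smooth_map h \<and>
     (\<forall>\<Psi> \<Upsilon>. h (solv_mult \<Psi> \<Upsilon>) = solv_mult (h \<Psi>) (h \<Upsilon>))"

text \<open>Dimension of the image of a Lie group homomorphism = dimension of the image
  immersed Lie subgroup = rank of its differential at the identity 0.\<close>
definition image_dim :: "('q::finite solv \<Rightarrow> 'p::finite solv) \<Rightarrow> nat" where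
  "image_dim h = dim (range (frechet_derivative h (at 0)))"

end

theory Submission
  imports Defs
begin


lemma cauchy_cont:
  fixes f :: "real \<Rightarrow> 'a::real_normed_vector"
  assumes add: "\<And>x y. f (x+y) = f x + f y" and cont: "continuous_on UNIV f"
  shows "f r = r *\<^sub>R f 1"
proof -
  have f0: "f 0 = 0" using add[of 0 0] by simp
  have nat: "f (of_nat n * x) = of_nat n *\<^sub>R f x" for n x
    by (induction n) (auto simp: f0 distrib_right add scaleR_add_left)
  have neg: "f (- x) = - f x" for x
    proof -
    have "f x + f (- x) = 0" using add[of x "-x"] f0 by simp
    then show ?thesis by (metis minus_unique)
  qed
  have int: "f (of_int m * x) = of_int m *\<^sub>R f x" for m x
  proof (cases "m \<ge> 0")
    case True then obtain n where "m = int n" by (intro that[of "nat m"]) simp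
    then show ?thesis using nat[of n x] by simp
  next
    case False then obtain n where "m = - int n" by (intro that[of "nat (-m)"]) simp
    then show ?thesis using nat[of n x] neg[of "of_nat n * x"] by simp
  qed
  have rat: "f r = r *\<^sub>R f 1" if "r \<in> \<rat>" for r
  proof -
    from that obtain a b where ab: "b > 0" "r = of_int a / of_int b" by (metis Rats_cases')
    have "f (of_int a) = of_int b *\<^sub>R f r"
      using int[of b r] ab by simp
    moreover have "f (of_int a) = of_int a *\<^sub>R f 1" using int[of a 1] by simp
    ultimately have "of_int b *\<^sub>R f r = of_int a *\<^sub>R f 1" by simp
    then have "inverse (of_int b) *\<^sub>R (of_int b *\<^sub>R f r) = inverse (of_int b) *\<^sub>R (of_int a *\<^sub>R f 1)"
      by simp
    then show ?thesis using ab by (simp add: divide_inverse mult.commute)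
  qed
  have cl: "closed {r. f r = r *\<^sub>R f 1}"
    by (intro closed_Collect_eq cont continuous_intros)
  have "\<rat> \<subseteq> {r. f r = r *\<^sub>R f 1}" using rat by blast
  then have "closure \<rat> \<subseteq> {r. f r = r *\<^sub>R f 1}" using cl by (simp add: closure_minimal)
  then show ?thesis using Rats_closure_real by auto
qed



definition Gf :: "real ^'p \<Rightarrow> real \<Rightarrow> real \<Rightarrow> real^'p \<Rightarrow> real^'q^'p \<Rightarrow> real \<Rightarrow> 'q::finite solv \<Rightarrow> 'p::finite solv" where
 "Gf b a \<alpha> d A \<beta> = (\<lambda>x. (a + \<alpha> * fst x, d + A *v snd x + (\<beta> * exp (- fst x)) *\<^sub>R b))"

lemma Gf_deriv:
  "((\<lambda>t. Gf b a \<alpha> d A \<beta> (x + t *\<^sub>R v)) has_vector_derivative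
      Gf b (\<alpha> * fst v) 0 (A *v snd v) 0 (- \<beta> * fst v) x) (at 0)"
proof -
  have e: "(\<lambda>t. Gf b a \<alpha> d A \<beta> (x + t *\<^sub>R v)) =
     (\<lambda>t. (a + \<alpha> * (fst x + t * fst v), d + A *v snd x + t *\<^sub>R (A *v snd v) + (\<beta> * exp (- (fst x + t * fst v))) *\<^sub>R b))"
    by (auto simp: Gf_def matrix_vector_right_distrib matrix_vector_mult_scaleR)
  have 1: "((\<lambda>t. a + \<alpha> * (fst x + t * fst v)) has_vector_derivative \<alpha> * fst v) (at 0)"
    unfolding has_real_derivative_iff_has_vector_derivative[symmetric]
    by (auto intro!: derivative_eq_intros)
  have 2: "((\<lambda>t. d + A *v snd x + t *\<^sub>R (A *v snd v) + (\<beta> * exp (- (fst x + t * fst v))) *\<^sub>R b)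
     has_vector_derivative (A *v snd v + (- \<beta> * fst v * exp (- fst x)) *\<^sub>R b)) (at 0)"
    by (auto intro!: derivative_eq_intros simp: has_real_derivative_iff_has_vector_derivative[symmetric])
  show ?thesis unfolding e
    by (rule has_vector_derivative_Pair[OF 1 2, THEN has_vector_derivative_eq_rhs]) (simp add: Gf_def)
qed

lemma Gf_iter: "\<exists>a \<alpha> d A \<beta>. dir_deriv_iter (Gf b a0 \<alpha>0 d0 A0 \<beta>0) vs = Gf b a \<alpha> d A \<beta>"
proof (induction vs)
  case Nil then show ?case by (metis dir_deriv_iter.simps(1))
next
  case (Cons v vs)
  then obtain a \<alpha> d A \<beta> where e: "dir_deriv_iter (Gf b a0 \<alpha>0 d0 A0 \<beta>0) vs = Gf b a \<alpha> d A \<beta>" by blast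
  have "dir_deriv_iter (Gf b a0 \<alpha>0 d0 A0 \<beta>0) (v # vs) x = Gf b (\<alpha> * fst v) 0 (A *v snd v) 0 (- \<beta> * fst v) x" for x
    by (simp add: e vector_derivative_at[OF Gf_deriv])
  then show ?case by blast
qed

lemma Gf_smooth: "smooth_map (Gf b a0 \<alpha>0 d0 A0 \<beta>0)"
  unfolding smooth_map_def
proof (intro conjI allI)
  fix vs
  obtain a \<alpha> d A \<beta> where e: "dir_deriv_iter (Gf b a0 \<alpha>0 d0 A0 \<beta>0) vs = Gf b a \<alpha> d A \<beta>"
    using Gf_iter by blast
  show "continuous_on UNIV (dir_deriv_iter (Gf b a0 \<alpha>0 d0 A0 \<beta>0) vs)"
    unfolding e unfolding Gf_def
    by (intro continuous_intros continuous_on_compose2[OF matrix_vector_mult_linear_continuous_on[of UNIV A], of UNIV snd]) auto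
  fix v x
  show "((\<lambda>t. dir_deriv_iter (Gf b a0 \<alpha>0 d0 A0 \<beta>0) vs (x + t *\<^sub>R v)) has_vector_derivative
          dir_deriv_iter (Gf b a0 \<alpha>0 d0 A0 \<beta>0) (v # vs) x) (at 0)"
    using Gf_deriv[of b a \<alpha> d A \<beta> x v] by (simp add: e vector_derivative_at[OF Gf_deriv])
qed

lemma conv_part:
  fixes W :: "real ^ 'q::finite ^ 'p::finite" and b :: "real ^ 'p"
  shows "solv_lie_hom (\<lambda>\<Upsilon> :: 'q solv. (fst \<Upsilon>, W *v snd \<Upsilon> + (1 - exp (- fst \<Upsilon>)) *\<^sub>R b))"
proof -
  have e: "(\<lambda>\<Upsilon> :: 'q solv. (fst \<Upsilon>, W *v snd \<Upsilon> + (1 - exp (- fst \<Upsilon>)) *\<^sub>R b)) = Gf b 0 1 b W (-1)"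
    by (auto simp: Gf_def fun_eq_iff algebra_simps)
  show ?thesis unfolding solv_lie_hom_def
  proof
    show "smooth_map (\<lambda>\<Upsilon> :: 'q solv. (fst \<Upsilon>, W *v snd \<Upsilon> + (1 - exp (- fst \<Upsilon>)) *\<^sub>R b))"
      unfolding e by (rule Gf_smooth)
    show "\<forall>\<Psi> \<Upsilon>. (fst (solv_mult \<Psi> \<Upsilon>), W *v snd (solv_mult \<Psi> \<Upsilon>) + (1 - exp (- fst (solv_mult \<Psi> \<Upsilon>))) *\<^sub>R b) =
         solv_mult (fst \<Psi>, W *v snd \<Psi> + (1 - exp (- fst \<Psi>)) *\<^sub>R b) (fst \<Upsilon>, W *v snd \<Upsilon> + (1 - exp (- fst \<Upsilon>)) *\<^sub>R b)"
      by (auto simp: solv_mult_def algebra_simps exp_add[symmetric] exp_diff)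
  qed
qed



lemma image_dim_le1:
  fixes h :: "'q::finite solv \<Rightarrow> 'p::finite solv"
  assumes hF: "\<And>x. h x = F (fst x)" and dF: "(F has_vector_derivative w) (at 0)"
  shows "image_dim h \<le> 1"
proof -
  have e: "h = F \<circ> fst" using hF by auto
  have d1: "(fst has_derivative fst) (at (0::'q solv))"
    by (rule bounded_linear_imp_has_derivative[OF bounded_linear_fst])
  have d2: "(F has_derivative (\<lambda>t. t *\<^sub>R w)) (at (fst (0::'q solv)))"
    using dF by (simp add: has_vector_derivative_def)
  have "(h has_derivative ((\<lambda>t. t *\<^sub>R w) \<circ> fst)) (at 0)"
    unfolding e by (rule diff_chain_at[OF d1 d2])
  then have fd: "frechet_derivative h (at 0) = (\<lambda>t. t *\<^sub>R w) \<circ> fst"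
    by (metis frechet_derivative_at)
  have "range (frechet_derivative h (at 0)) \<subseteq> span {w}"
    unfolding fd by (auto simp: span_singleton)
  then have "dim (range (frechet_derivative h (at 0))) \<le> card {w}"
    by (intro dim_le_card) auto
  then show ?thesis unfolding image_dim_def by simp
qed



lemma aux: "(p::'a::real_vector) + x *\<^sub>R q = q + y *\<^sub>R p \<Longrightarrow> (1 - y) *\<^sub>R p = (1 - x) *\<^sub>R q"
  by (simp add: scaleR_diff_left) (metis add_diff_cancel_left' add_diff_cancel_right' diff_diff_eq2 add.commute)

lemma main_exist:
  fixes h :: "'q::finite solv \<Rightarrow> 'p::finite solv"
  assumes hom: "solv_lie_hom h" and dimh: "image_dim h > 1"
  shows "\<exists>W b. \<forall>\<Upsilon>. h \<Upsilon> = (fst \<Upsilon>, W *v snd \<Upsilon> + (1 - exp (- fst \<Upsilon>)) *\<^sub>R b)"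
proof -
  have cont: "continuous_on UNIV h" using hom unfolding solv_lie_hom_def smooth_map_def
    by (metis dir_deriv_iter.simps(1))
  have m: "\<And>\<Psi> \<Upsilon>. h (solv_mult \<Psi> \<Upsilon>) = solv_mult (h \<Psi>) (h \<Upsilon>)"
    using hom solv_lie_hom_def by blast
  have m1: "fst (h (solv_mult \<Psi> \<Upsilon>)) = fst (h \<Upsilon>) + fst (h \<Psi>)" for \<Psi> \<Upsilon>
    using m[of \<Psi> \<Upsilon>] by (simp add: solv_mult_def)
  have m2: "snd (h (solv_mult \<Psi> \<Upsilon>)) = snd (h \<Upsilon>) + exp (- fst (h \<Upsilon>)) *\<^sub>R snd (h \<Psi>)" for \<Psi> \<Upsilon>
    using m[of \<Psi> \<Upsilon>] by (simp add: solv_mult_def)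
  define a where "a t = fst (h (t, 0))" for t
  define \<phi> where "\<phi> v = fst (h (0, v))" for v
  define g where "g v = snd (h (0, v))" for v
  define k where "k t = snd (h (t, 0))" for t
  have sm1: "solv_mult (t, 0) (0, v) = (t, v)" for t v by (simp add: solv_mult_def)
  have sm2: "solv_mult (0, exp t *\<^sub>R v) (t, 0) = (t, v)" for t v
    by (simp add: solv_mult_def exp_add[symmetric])
  have sm3: "solv_mult (0, u) (0, v) = (0, v + u)" for u v by (simp add: solv_mult_def)
  have sm4: "solv_mult (s, 0) (t, 0) = (t + s, 0)" for s t by (simp add: solv_mult_def)
  have \<phi>add: "\<phi> (v + u) = \<phi> v + \<phi> u" for u v
    using m1[of "(0,u)" "(0,v)"] unfolding sm3 \<phi>_def by simp
  have \<phi>0: "\<phi> v = 0" for v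
  proof -
    have "fst (h (t, v)) = \<phi> v + a t" for t v
      using m1[of "(t,0)" "(0,v)"] unfolding sm1 \<phi>_def a_def by simp
    moreover have "fst (h (t, v)) = a t + \<phi> (exp t *\<^sub>R v)" for t v
      using m1[of "(0, exp t *\<^sub>R v)" "(t,0)"] unfolding sm2 \<phi>_def a_def by simp
    ultimately have "\<phi> v = \<phi> (exp (ln 2) *\<^sub>R v)" by (metis add.commute add_left_cancel)
    also have "\<dots> = \<phi> (v + v)" by (simp add: scaleR_2)
    finally show ?thesis using \<phi>add[of v v] by simp
  qed
  have h1: "fst (h (t, v)) = a t" for t v
    using m1[of "(t,0)" "(0,v)"] \<phi>0[of v] unfolding sm1 \<phi>_def a_def by simp
  have aadd: "a (t + s) = a t + a s" for t s
    using m1[of "(s,0)" "(t,0)"] unfolding sm4 a_def by simp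
  have acont: "continuous_on UNIV a"
    unfolding a_def
    by (intro continuous_on_compose2[OF continuous_on_fst continuous_on_compose2[OF cont, of UNIV "\<lambda>t. (t, 0)"]]) (auto intro!: continuous_intros)
  define c where "c = a 1"
  have ac: "a t = c * t" for t using cauchy_cont[OF aadd acont, of t] unfolding c_def by simp
  have gadd: "g (v + u) = g v + g u" for u v
    using m2[of "(0,u)" "(0,v)"] h1[of 0 v] ac[of 0] unfolding sm3 g_def by simp
  have gcont: "continuous_on UNIV g"
    unfolding g_def
    by (intro continuous_on_compose2[OF continuous_on_snd continuous_on_compose2[OF cont, of UNIV "\<lambda>v. (0, v)"]]) (auto intro!: continuous_intros)
  have gscale: "g (r *\<^sub>R v) = r *\<^sub>R g v" for r v
  proof -
    have "continuous_on UNIV (\<lambda>r. g (r *\<^sub>R v))"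
      by (intro continuous_on_compose2[OF gcont]) (auto intro!: continuous_intros)
    from cauchy_cont[of "\<lambda>r. g (r *\<^sub>R v)", OF _ this] show ?thesis
      by (simp add: gadd scaleR_add_left)
  qed
  have glin: "linear g" by (intro linearI gadd gscale)
  define W where "W = matrix g"
  have gW: "g v = W *v v" for v
    unfolding W_def using matrix_vector_mul(2)[OF glin] by metis
  have h2: "snd (h (t, v)) = g v + k t" for t v
    using m2[of "(t,0)" "(0,v)"] h1[of 0 v] ac[of 0] unfolding sm1 g_def k_def by simp
  have h2': "snd (h (t, v)) = k t + exp (- (c * t)) *\<^sub>R g (exp t *\<^sub>R v)" for t v
    using m2[of "(0, exp t *\<^sub>R v)" "(t,0)"] h1[of t 0] ac[of t] unfolding sm2 g_def k_def by simp
  have gex: "g v = (exp (- (c * t)) * exp t) *\<^sub>R g v" for t v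
    using h2[of t v] h2'[of t v] by (simp add: gscale)
  have kadd: "k (t + s) = k t + exp (- (c * t)) *\<^sub>R k s" for t s
    using m2[of "(s,0)" "(t,0)"] h1[of t 0] ac[of t] unfolding sm4 k_def by simp
  show ?thesis
  proof (cases "c = 1")
    case True
    have ke: "k t + exp (- t) *\<^sub>R k 1 = k 1 + exp (- 1) *\<^sub>R k t" for t
      using kadd[of t 1] kadd[of 1 t] True by (simp add: add.commute)
    have kk: "(1 - exp (- 1)) *\<^sub>R k t = (1 - exp (- t)) *\<^sub>R k 1" for t
      by (rule aux[OF ke])
    have ne: "1 - exp (- 1::real) \<noteq> 0" by simp
    define b where "b = inverse (1 - exp (- 1::real)) *\<^sub>R k 1"
    have kb: "k t = (1 - exp (- t)) *\<^sub>R b" for t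
    proof -
      have "k t = inverse (1 - exp (- 1::real)) *\<^sub>R ((1 - exp (- 1)) *\<^sub>R k t)" using ne by simp
      also have "\<dots> = (1 - exp (- t)) *\<^sub>R b" unfolding kk b_def by (simp add: mult.commute)
      finally show ?thesis .
    qed
    have "\<forall>\<Upsilon>. h \<Upsilon> = (fst \<Upsilon>, W *v snd \<Upsilon> + (1 - exp (- fst \<Upsilon>)) *\<^sub>R b)"
    proof
      fix \<Upsilon> :: "'q solv"
      obtain t v where tv: "\<Upsilon> = (t, v)" by fastforce
      show "h \<Upsilon> = (fst \<Upsilon>, W *v snd \<Upsilon> + (1 - exp (- fst \<Upsilon>)) *\<^sub>R b)"
        using h1[of t v] h2[of t v] ac[of t] True unfolding tv
        by (simp add: gW kb prod_eq_iff)
    qed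
    then show ?thesis by blast
  next
    case False
    have g0: "g v = 0" for v
    proof -
      define t where "t = 1 / (1 - c)"
      have "exp (- (c * t)) * exp t = exp 1"
        unfolding t_def exp_add[symmetric] using False by (simp add: field_simps)
      then have "g v = exp 1 *\<^sub>R g v" using gex[of v t] by simp
      then have "(exp 1 - 1) *\<^sub>R g v = 0" by (simp add: algebra_simps)
      then show ?thesis by simp
    qed
    have hF: "h x = (c * fst x, k (fst x))" for x
      using h1[of "fst x" "snd x"] h2[of "fst x" "snd x"] ac[of "fst x"] g0
      by (simp add: prod_eq_iff)
    have "image_dim h \<le> 1"
    proof (cases "c = 0")
      case True
      have kcont: "continuous_on UNIV k"
        unfolding k_def
        by (intro continuous_on_compose2[OF continuous_on_snd continuous_on_compose2[OF cont, of UNIV "\<lambda>t. (t, 0)"]]) (auto intro!: continuous_intros)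
      have kl: "k t = t *\<^sub>R k 1" for t
      proof -
        have "k (x + y) = k x + k y" for x y using kadd[of x y] True by simp
        then show ?thesis using cauchy_cont[OF _ kcont] by blast
      qed
      show ?thesis
      proof (rule image_dim_le1)
        show "h x = (\<lambda>t. (0::real, t *\<^sub>R k 1)) (fst x)" for x using hF[of x] True kl[of "fst x"] by simp
        show "((\<lambda>t. (0::real, t *\<^sub>R k 1)) has_vector_derivative (0, k 1)) (at 0)"
          by (intro derivative_eq_intros) auto
      qed
    next
      case cne: False
      have ke: "k t + exp (- (c * t)) *\<^sub>R k 1 = k 1 + exp (- c) *\<^sub>R k t" for t
        using kadd[of t 1] kadd[of 1 t] by (simp add: add.commute)
      have kk: "(1 - exp (- c)) *\<^sub>R k t = (1 - exp (- (c * t))) *\<^sub>R k 1" for t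
        by (rule aux[OF ke])
      have ne: "1 - exp (- c) \<noteq> 0" using cne by simp
      define b where "b = inverse (1 - exp (- c)) *\<^sub>R k 1"
      have kb: "k t = (1 - exp (- (c * t))) *\<^sub>R b" for t
      proof -
        have "k t = inverse (1 - exp (- c)) *\<^sub>R ((1 - exp (- c)) *\<^sub>R k t)" using ne by simp
        also have "\<dots> = (1 - exp (- (c * t))) *\<^sub>R b" unfolding kk b_def by (simp add: mult.commute)
        finally show ?thesis .
      qed
      show ?thesis
      proof (rule image_dim_le1)
        show "h x = (\<lambda>t. (c * t, (1 - exp (- (c * t))) *\<^sub>R b)) (fst x)" for x using hF[of x] kb by simp
        show "((\<lambda>t. (c * t, (1 - exp (- (c * t))) *\<^sub>R b)) has_vector_derivative (c, c *\<^sub>R b)) (at 0)"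
          by (intro derivative_eq_intros; (simp add: has_real_derivative_iff_has_vector_derivative[symmetric])?; (intro derivative_eq_intros)?) auto
      qed
    qed
    then show ?thesis using dimh by simp
  qed
qed


theorem theorem2:
  shows "(\<forall>h :: 'q::finite solv \<Rightarrow> 'p::finite solv.
            solv_lie_hom h \<and> image_dim h > 1 \<longrightarrow>
            (\<exists>!Wb :: (real ^ 'q ^ 'p) \<times> (real ^ 'p).
               \<forall>\<Upsilon>. h \<Upsilon> = (fst \<Upsilon>, fst Wb *v snd \<Upsilon> + (1 - exp (- fst \<Upsilon>)) *\<^sub>R snd Wb)))
       \<and> (\<forall>(W :: real ^ 'q ^ 'p) (b :: real ^ 'p).
            solv_lie_hom (\<lambda>\<Upsilon> :: 'q solv.
               (fst \<Upsilon>, W *v snd \<Upsilon> + (1 - exp (- fst \<Upsilon>)) *\<^sub>R b)))"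
proof (intro conjI allI impI)
  fix h :: "'q::finite solv \<Rightarrow> 'p::finite solv"
  assume H: "solv_lie_hom h \<and> image_dim h > 1"
  then obtain W b where Wb: "\<forall>\<Upsilon>. h \<Upsilon> = (fst \<Upsilon>, W *v snd \<Upsilon> + (1 - exp (- fst \<Upsilon>)) *\<^sub>R b)"
    using main_exist by blast
  show "\<exists>!Wb :: (real ^ 'q ^ 'p) \<times> (real ^ 'p).
               \<forall>\<Upsilon>. h \<Upsilon> = (fst \<Upsilon>, fst Wb *v snd \<Upsilon> + (1 - exp (- fst \<Upsilon>)) *\<^sub>R snd Wb)"
  proof (rule ex1I[of _ "(W, b)"])
    show "\<forall>\<Upsilon>. h \<Upsilon> = (fst \<Upsilon>, fst (W, b) *v snd \<Upsilon> + (1 - exp (- fst \<Upsilon>)) *\<^sub>R snd (W, b))"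
      using Wb by simp
    fix Wb' :: "(real ^ 'q ^ 'p) \<times> (real ^ 'p)"
    assume W': "\<forall>\<Upsilon>. h \<Upsilon> = (fst \<Upsilon>, fst Wb' *v snd \<Upsilon> + (1 - exp (- fst \<Upsilon>)) *\<^sub>R snd Wb')"
    have "fst Wb' *v v = W *v v" for v
      using spec[OF W', of "(0, v)"] spec[OF Wb, of "(0, v)"] by simp
    then have e1: "fst Wb' = W" by (simp add: matrix_eq)
    have "(1 - exp (- 1)) *\<^sub>R snd Wb' = (1 - exp (- 1::real)) *\<^sub>R b"
      using spec[OF W', of "(1, 0)"] spec[OF Wb, of "(1, 0)"] by simp
    then have e2: "snd Wb' = b" by simp
    show "Wb' = (W, b)" using e1 e2 by (simp add: prod_eq_iff)
  qed
next
  fix W :: "real ^ 'q ^ 'p" and b :: "real ^ 'p"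
  show "solv_lie_hom (\<lambda>\<Upsilon> :: 'q solv. (fst \<Upsilon>, W *v snd \<Upsilon> + (1 - exp (- fst \<Upsilon>)) *\<^sub>R b))"
    by (rule conv_part)
qed

end
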